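(* Let $A$ be a finite alphabet. Every sequence $(w_n)_{n\ge0}$ of words over $A$ admits an adequate subsequence.
   Context: For $B\subseteq A$, let $B^{=}=\{w\in B^*:\mathrm{alph}(w)=B\}$ (words whose set of letters is exactly $B$). A factorization pattern is $(\vec u,\vec B)$ with $\vec u=(u_0,\dots,u_p)\in(A^* )^{p+1}$ and $\vec B=(B_1,\dots,B_p)$ nonempty subsets of $A$, $p\ge0$. For $n\ge0$ let $L_n(\vec u,\vec B)=u_0(B_1^{=})^nu_1(B_2^{=})^nu_2\cdots u_{p-1}(B_p^{=})^nu_p$. A sequence $(w_n)_n$ is $(\vec u,\vec B)$-adequate if $w_n\in L_n(\vec u,\vec B)$ for all $n\ge0$, and adequate if it is $(\vec u,\vec B)$-adequate for some factorization pattern $(\vec u,\vec B)$. *)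

theory Defs
  imports Main
begin

definition exact_alph :: "'a set \<Rightarrow> 'a list set" where
  "exact_alph B = {w. set w = B}"

fun lang_pow :: "'a list set \<Rightarrow> nat \<Rightarrow> 'a list set" where
  "lang_pow L 0 = {[]}"
| "lang_pow L (Suc n) = {x @ y | x y. x \<in> L \<and> y \<in> lang_pow L n}"

(* L_n(us,Bs) = u_0 (B_1^=)^n u_1 ... (B_p^=)^n u_p,
   where us = [u_0,...,u_p] and Bs = [B_1,...,B_p] *)
fun L_pat :: "'a list list \<Rightarrow> 'a set list \<Rightarrow> nat \<Rightarrow> 'a list set" where
  "L_pat [u] [] n = {u}"
| "L_pat (u # us) (B # Bs) n =
     {u @ x @ y | x y. x \<in> lang_pow (exact_alph B) n \<and> y \<in> L_pat us Bs n}"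
| "L_pat _ _ n = {}"

definition fact_pattern :: "'a set \<Rightarrow> 'a list list \<Rightarrow> 'a set list \<Rightarrow> bool" where
  "fact_pattern A us Bs \<longleftrightarrow> length us = Suc (length Bs)
     \<and> (\<forall>u\<in>set us. set u \<subseteq> A)
     \<and> (\<forall>B\<in>set Bs. B \<noteq> {} \<and> B \<subseteq> A)"

definition adequate_for :: "'a list list \<Rightarrow> 'a set list \<Rightarrow> (nat \<Rightarrow> 'a list) \<Rightarrow> bool" where
  "adequate_for us Bs w \<longleftrightarrow> (\<forall>n. w n \<in> L_pat us Bs n)"

definition adequate :: "'a set \<Rightarrow> (nat \<Rightarrow> 'a list) \<Rightarrow> bool" where
  "adequate A w \<longleftrightarrow> (\<exists>us Bs. fact_pattern A us Bs \<and> adequate_for us Bs w)"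

end

theory Submission
  imports Defs "HOL-Library.Infinite_Set" "HOL-Library.Nat_Bijection"
begin

lemma exact_alph_mem[simp]: "x \<in> exact_alph B \<longleftrightarrow> set x = B"
  by (simp add: exact_alph_def)

lemma pow_SucI: "x \<in> L \<Longrightarrow> y \<in> lang_pow L n \<Longrightarrow> x @ y \<in> lang_pow L (Suc n)"
  by auto

lemma pow_SucE: "w \<in> lang_pow L (Suc n) \<Longrightarrow> (\<And>x y. w = x @ y \<Longrightarrow> x \<in> L \<Longrightarrow> y \<in> lang_pow L n \<Longrightarrow> P) \<Longrightarrow> P"
  by auto

lemma pow_Suc_sub: "w \<in> lang_pow (exact_alph C) (Suc j) \<Longrightarrow> set w = C"
proof (induction j arbitrary: w)
  case 0 then show ?case by auto
next
  case (Suc j)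
  from Suc.prems obtain x y where "w = x @ y" "set x = C" "y \<in> lang_pow (exact_alph C) (Suc j)"
    by (auto elim!: pow_SucE)
  with Suc.IH[of y] show ?case by auto
qed

lemma pow_add: "x \<in> lang_pow L a \<Longrightarrow> y \<in> lang_pow L b \<Longrightarrow> x @ y \<in> lang_pow L (a + b)"
proof (induction a arbitrary: x)
  case 0 then show ?case by auto
next
  case (Suc a)
  from Suc.prems(1) obtain x1 x2 where "x = x1 @ x2" "x1 \<in> L" "x2 \<in> lang_pow L a" by (auto elim!: pow_SucE)
  with Suc.IH[of x2] Suc.prems(2) show ?case using pow_SucI[of x1 L "x2 @ y" "a + b"] by simp
qed

lemma pow_split: "w \<in> lang_pow L (a + b) \<Longrightarrow> \<exists>x y. w = x @ y \<and> x \<in> lang_pow L a \<and> y \<in> lang_pow L b"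
proof (induction a arbitrary: w)
  case 0 then show ?case by force
next
  case (Suc a)
  from Suc.prems obtain x1 x2 where "w = x1 @ x2" "x1 \<in> L" "x2 \<in> lang_pow L (a + b)" by (auto elim!: pow_SucE)
  with Suc.IH[of x2] obtain y1 y2 where "x2 = y1 @ y2" "y1 \<in> lang_pow L a" "y2 \<in> lang_pow L b" by blast
  then show ?case using \<open>w = x1 @ x2\<close> \<open>x1 \<in> L\<close> pow_SucI[of x1 L y1 a]
    by (intro exI[of _ "x1 @ y1"] exI[of _ y2]) simp
qed

lemma pow_mono:
  assumes "w \<in> lang_pow (exact_alph C) N" "1 \<le> m" "m \<le> N"
  shows "w \<in> lang_pow (exact_alph C) m"
proof -
  have "N = Suc (N - m) + (m - 1)" using assms by simp
  then obtain x y where xy: "w = x @ y" "x \<in> lang_pow (exact_alph C) (Suc (N - m))"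
       "y \<in> lang_pow (exact_alph C) (m - 1)"
    using pow_split[of w "exact_alph C" "Suc (N - m)" "m - 1"] assms(1) by metis
  have "set x = C" using pow_Suc_sub xy(2) by blast
  hence "x @ y \<in> lang_pow (exact_alph C) (Suc (m - 1))" using xy(3) by (intro pow_SucI) simp_all
  thus ?thesis using xy(1) assms(2) by simp
qed

lemma pow_app_right:
  "w \<in> lang_pow (exact_alph C) (Suc j) \<Longrightarrow> set p \<subseteq> C \<Longrightarrow> w @ p \<in> lang_pow (exact_alph C) (Suc j)"
proof (induction j arbitrary: w)
  case 0 then show ?case by auto
next
  case (Suc j)
  from Suc.prems(1) obtain x y where "w = x @ y" "set x = C" "y \<in> lang_pow (exact_alph C) (Suc j)"
    by (auto elim!: pow_SucE)
  with Suc.IH[of y] Suc.prems(2) show ?case using pow_SucI[of x "exact_alph C" "y @ p" "Suc j"] by simp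
qed

lemma pow_app_left:
  "w \<in> lang_pow (exact_alph C) (Suc j) \<Longrightarrow> set p \<subseteq> C \<Longrightarrow> p @ w \<in> lang_pow (exact_alph C) (Suc j)"
proof -
  assume a: "w \<in> lang_pow (exact_alph C) (Suc j)" "set p \<subseteq> C"
  then obtain x y where "w = x @ y" "set x = C" "y \<in> lang_pow (exact_alph C) j" by (auto elim!: pow_SucE)
  then show ?thesis using a(2) pow_SucI[of "p @ x" "exact_alph C" y j] by auto
qed



lemma L_pat_len: "x \<in> L_pat us Bs n \<Longrightarrow> length us = Suc (length Bs)"
  by (induction us Bs n arbitrary: x rule: L_pat.induct) auto

lemma L_pat_zero: "length us = Suc (length Bs) \<Longrightarrow> L_pat us Bs 0 = {concat us}"
  by (induction us Bs "0::nat" rule: L_pat.induct) auto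

lemma L_pat_mono: "x \<in> L_pat us Bs N \<Longrightarrow> 1 \<le> n \<Longrightarrow> n \<le> N \<Longrightarrow> x \<in> L_pat us Bs n"
proof (induction us Bs N arbitrary: x rule: L_pat.induct)
  case (2 u us B Bs N)
  then obtain a b where ab: "x = u @ a @ b" "a \<in> lang_pow (exact_alph B) N" "b \<in> L_pat us Bs N" by auto
  have "a \<in> lang_pow (exact_alph B) n" using pow_mono[OF ab(2)] 2(3,4) by blast
  moreover have "b \<in> L_pat us Bs n" using 2(1)[OF ab(3) 2(3,4)] .
  ultimately show ?case using ab(1) by auto
qed auto

lemma L_pat_prepend: "y \<in> L_pat (v # vs) Ds n \<Longrightarrow> u @ y \<in> L_pat ((u @ v) # vs) Ds n"
  by (cases vs; cases Ds) auto

definition pcat :: "'a list list \<Rightarrow> 'a list list \<Rightarrow> 'a list list" where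
  "pcat us vs = butlast us @ [last us @ hd vs] @ tl vs"

lemma L_pat_app: "x \<in> L_pat us Bs n \<Longrightarrow> y \<in> L_pat vs Ds n \<Longrightarrow> x @ y \<in> L_pat (pcat us vs) (Bs @ Ds) n"
proof (induction us Bs n arbitrary: x rule: L_pat.induct)
  case (1 u n)
  have "vs \<noteq> []" using L_pat_len[OF 1(2)] by auto
  then have "vs = hd vs # tl vs" by simp
  then have "u @ y \<in> L_pat ((u @ hd vs) # tl vs) Ds n" using 1(2) L_pat_prepend[of y "hd vs" "tl vs" Ds n u] by simp
  then show ?case using 1(1) by (simp add: pcat_def)
next
  case (2 u us B Bs n)
  then obtain a b where ab: "x = u @ a @ b" "a \<in> lang_pow (exact_alph B) n" "b \<in> L_pat us Bs n" by auto
  have "us \<noteq> []" using L_pat_len[OF ab(3)] by auto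
  then have e: "pcat (u # us) vs = u # pcat us vs" by (simp add: pcat_def)
  have "b @ y \<in> L_pat (pcat us vs) (Bs @ Ds) n" using 2(1)[OF ab(3) 2(3)] .
  then show ?case using ab(1,2) by (auto simp: e)
qed auto



definition dspec :: "'a set \<Rightarrow> 'a list \<Rightarrow> ('a list \<times> 'a) list \<times> 'a list \<Rightarrow> bool" where
  "dspec C w p \<longleftrightarrow> w = concat (map (\<lambda>(z,a). z @ [a]) (fst p)) @ snd p
     \<and> (\<forall>b\<in>set (fst p). set (fst b) \<subset> C \<and> set (fst b @ [snd b]) = C) \<and> set (snd p) \<subset> C"

lemma dspec_ex: "C \<noteq> {} \<Longrightarrow> set w \<subseteq> C \<Longrightarrow> \<exists>p. dspec C w p"
proof (induction w rule: rev_induct)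
  case Nil
  have "dspec C [] ([], [])" using Nil by (simp add: dspec_def psubset_eq)
  then show ?case by blast
next
  case (snoc x w)
  then obtain bs r where p: "dspec C w (bs, r)" by (metis prod.exhaust set_append le_sup_iff)
  have w: "w = concat (map (\<lambda>(z,a). z @ [a]) bs) @ r" and bs: "\<forall>b\<in>set bs. set (fst b) \<subset> C \<and> set (fst b @ [snd b]) = C"
    and r: "set r \<subset> C" using p by (simp_all add: dspec_def)
  show ?case
  proof (cases "set (r @ [x]) \<subset> C")
    case True
    have "dspec C (w @ [x]) (bs, r @ [x])" using w bs True by (simp add: dspec_def)
    then show ?thesis by blast
  next
    case False
    have "set (r @ [x]) \<subseteq> C" using snoc.prems r by auto
    then have rx: "set (r @ [x]) = C" using False by blast
    have "dspec C (w @ [x]) (bs @ [(r, x)], [])" using w bs r rx snoc.prems(1) by (simp add: dspec_def psubset_eq)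
    then show ?thesis by blast
  qed
qed

definition gdec :: "'a set \<Rightarrow> 'a list \<Rightarrow> ('a list \<times> 'a) list \<times> 'a list" where
  "gdec C w = (SOME p. dspec C w p)"

lemma gdec: "C \<noteq> {} \<Longrightarrow> set w \<subseteq> C \<Longrightarrow> dspec C w (gdec C w)"
  unfolding gdec_def by (rule someI_ex) (rule dspec_ex)

lemma blocks_pow:
  "(\<forall>b\<in>set bs. set (fst b @ [snd b]) = C) \<Longrightarrow> set r \<subseteq> C \<Longrightarrow> bs \<noteq> [] \<Longrightarrow>
   concat (map (\<lambda>(z,a). z @ [a]) bs) @ r \<in> lang_pow (exact_alph C) (length bs)"
proof (induction bs)
  case Nil then show ?case by simp
next
  case (Cons b bs)
  obtain z a where b: "b = (z, a)" by fastforce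
  have zC: "set (z @ [a]) = C" using Cons.prems(1) b by auto
  show ?case
  proof (cases "bs = []")
    case True
    have "z @ [a] \<in> lang_pow (exact_alph C) (Suc 0)"
      using pow_SucI[of "z @ [a]" "exact_alph C" "[]" 0] zC by simp
    then have "(z @ [a]) @ r \<in> lang_pow (exact_alph C) (Suc 0)"
      using Cons.prems(2) by (rule pow_app_right)
    then show ?thesis using True b by simp
  next
    case False
    then have "concat (map (\<lambda>(z,a). z @ [a]) bs) @ r \<in> lang_pow (exact_alph C) (length bs)"
      using Cons by simp
    then have "(z @ [a]) @ (concat (map (\<lambda>(z,a). z @ [a]) bs) @ r) \<in> lang_pow (exact_alph C) (Suc (length bs))"
      using zC by (intro pow_SucI) simp_all
    then show ?thesis using b by simp
  qed
qed

definition spat :: "'a list \<Rightarrow> 'a list list" where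
  "spat y = [] # map (\<lambda>c. [c]) y @ [[]]"

lemma concat_spat: "concat (spat y) = y"
  by (induction y) (auto simp: spat_def)



lemma sm_ge: "strict_mono (f :: nat \<Rightarrow> nat) \<Longrightarrow> n \<le> f n"
proof (induction n)
  case (Suc n)
  then have "f n < f (Suc n)" by (simp add: strict_mono_def)
  then show ?case using Suc by simp
qed simp

lemma emb:
  "1 \<le> m \<Longrightarrow> set y \<subseteq> C \<Longrightarrow> w \<in> lang_pow (exact_alph C) N \<Longrightarrow> (length y + 1) * (m + 1) \<le> N
   \<Longrightarrow> w \<in> L_pat (spat y) (replicate (length y + 1) C) m"
proof (induction y arbitrary: w N)
  case Nil
  then have "w \<in> lang_pow (exact_alph C) m" using pow_mono[of w C N m] by simp
  then show ?case by (simp add: spat_def)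
next
  case (Cons c y)
  define N' where "N' = N - m - 1"
  have N: "N = m + (Suc N')" using Cons.prems(4) by (simp add: N'_def)
  obtain X W1 where XW: "w = X @ W1" "X \<in> lang_pow (exact_alph C) m" "W1 \<in> lang_pow (exact_alph C) (Suc N')"
    using pow_split[of w _ m "Suc N'"] Cons.prems(3) N by metis
  obtain Y W where YW: "W1 = Y @ W" "set Y = C" "W \<in> lang_pow (exact_alph C) N'"
    using XW(3) by (auto elim!: pow_SucE)
  have "c \<in> set Y" using YW(2) Cons.prems(2) by simp
  then obtain p q where pq: "Y = p @ c # q" using split_list by metis
  have m: "m = Suc (m - 1)" using Cons.prems(1) by simp
  have pC: "set p \<subseteq> C" "set q \<subseteq> C" using YW(2) pq by auto
  have Xp: "X @ p \<in> lang_pow (exact_alph C) m"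
    using pow_app_right[of X C "m - 1" p] XW(2) m pC by simp
  have N'ge: "(length y + 1) * (m + 1) \<le> N'" using Cons.prems(4) by (simp add: N'_def)
  then have N'': "N' = Suc (N' - 1)" by (cases N') auto
  have qW: "q @ W \<in> lang_pow (exact_alph C) N'"
    using pow_app_left[of W C "N' - 1" q] YW(3) pC N'' by simp
  have IH: "q @ W \<in> L_pat (spat y) (replicate (length y + 1) C) m"
    using Cons.IH[OF Cons.prems(1) _ qW N'ge] Cons.prems(2) by simp
  have sh: "[c] @ (q @ W) \<in> L_pat (([c] @ []) # (map (\<lambda>c. [c]) y @ [[]])) (replicate (length y + 1) C) m"
    using L_pat_prepend[of "q @ W" "[]" "map (\<lambda>c. [c]) y @ [[]]" _ m "[c]"] IH by (simp add: spat_def)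
  have w: "w = [] @ (X @ p) @ ([c] @ (q @ W))" using XW YW pq by simp
  have "spat (c # y) = [] # (([c] @ []) # (map (\<lambda>c. [c]) y @ [[]]))" by (simp add: spat_def)
  moreover have "replicate (length (c # y) + 1) C = C # replicate (length y + 1) C" by simp
  ultimately show ?case using w Xp sh by (simp only: L_pat.simps) blast
qed

lemma ad_nil: "adequate A (\<lambda>n. [])"
  unfolding adequate_def adequate_for_def fact_pattern_def
  by (intro exI[of _ "[[]]"] exI[of _ "[]"]) simp

lemma ad_letter: "a \<in> A \<Longrightarrow> adequate A (\<lambda>n. [a])"
  unfolding adequate_def adequate_for_def fact_pattern_def
  by (intro exI[of _ "[[a]]"] exI[of _ "[]"]) simp

lemma ad_app:
  assumes "adequate A x" "adequate A y"
  shows "adequate A (\<lambda>n. x n @ y n)"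
proof -
  obtain us Bs where u: "fact_pattern A us Bs" "\<forall>n. x n \<in> L_pat us Bs n"
    using assms(1) by (auto simp: adequate_def adequate_for_def)
  obtain vs Ds where v: "fact_pattern A vs Ds" "\<forall>n. y n \<in> L_pat vs Ds n"
    using assms(2) by (auto simp: adequate_def adequate_for_def)
  have ne: "us \<noteq> []" "vs \<noteq> []" using u(1) v(1) by (auto simp: fact_pattern_def)
  have len: "length (pcat us vs) = Suc (length (Bs @ Ds))"
    using u(1) v(1) ne by (simp add: fact_pattern_def pcat_def)
  have s1: "\<forall>u\<in>set us. set u \<subseteq> A" "\<forall>u\<in>set vs. set u \<subseteq> A" using u(1) v(1) by (simp_all add: fact_pattern_def)
  have "set (pcat us vs) \<subseteq> set us \<union> set vs \<union> {last us @ hd vs}"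
    unfolding pcat_def using in_set_butlastD list.set_sel(2)[OF ne(2)] by fastforce
  moreover have "set (last us @ hd vs) \<subseteq> A" using s1 ne last_in_set hd_in_set by fastforce
  ultimately have "\<forall>w\<in>set (pcat us vs). set w \<subseteq> A" using s1 by blast
  moreover have "\<forall>B\<in>set (Bs @ Ds). B \<noteq> {} \<and> B \<subseteq> A" using u(1) v(1) by (auto simp: fact_pattern_def)
  ultimately have "fact_pattern A (pcat us vs) (Bs @ Ds)" using len by (simp add: fact_pattern_def)
  then show ?thesis using u(2) v(2) L_pat_app
    unfolding adequate_def adequate_for_def by blast
qed

lemma ad_sub:
  assumes "adequate A x" "strict_mono \<chi>" "\<chi> 0 = 0"
  shows "adequate A (\<lambda>n. x (\<chi> n))"
proof -
  obtain us Bs where u: "fact_pattern A us Bs" "\<forall>n. x n \<in> L_pat us Bs n"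
    using assms(1) by (auto simp: adequate_def adequate_for_def)
  have "x (\<chi> n) \<in> L_pat us Bs n" for n
  proof (cases n)
    case 0 then show ?thesis using u assms(3) by simp
  next
    case (Suc k)
    then show ?thesis using L_pat_mono[of "x (\<chi> n)" us Bs "\<chi> n" n] u sm_ge[OF assms(2), of n] by simp
  qed
  then show ?thesis using u(1) by (auto simp: adequate_def adequate_for_def)
qed

lemma ad_blocks:
  "(\<forall>i<K. adequate A (Z i)) \<Longrightarrow> (\<forall>i<K. \<alpha> i \<in> A) \<Longrightarrow> adequate A R \<Longrightarrow>
   adequate A (\<lambda>n. concat (map (\<lambda>i. Z i n @ [\<alpha> i]) [0..<K]) @ R n)"
proof (induction K arbitrary: R)
  case 0 then show ?case by simp
next
  case (Suc K)
  have "adequate A (\<lambda>n. Z K n @ ([\<alpha> K] @ R n))"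
    using Suc.prems by (intro ad_app ad_letter) auto
  then have "adequate A (\<lambda>n. concat (map (\<lambda>i. Z i n @ [\<alpha> i]) [0..<K]) @ (Z K n @ [\<alpha> K] @ R n))"
    using Suc.prems by (intro Suc.IH) auto
  then show ?case by simp
qed



lemma sm_comp: "strict_mono (f :: nat \<Rightarrow> nat) \<Longrightarrow> strict_mono g \<Longrightarrow> strict_mono (\<lambda>n. f (g n))"
  unfolding strict_mono_def by blast

lemma pigeon_seq:
  fixes f :: "nat \<Rightarrow> 'b"
  assumes "finite S" "\<forall>n. f n \<in> S"
  shows "\<exists>(\<phi>::nat\<Rightarrow>nat) x. strict_mono \<phi> \<and> (\<forall>n. f (\<phi> n) = x)"
proof -
  have "f ` UNIV \<subseteq> S" using assms(2) by blast
  then have "finite (f ` UNIV)" using assms(1) finite_subset by blast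
  then obtain a0 where inf: "infinite {a. f a = f a0}"
    using pigeonhole_infinite[of "UNIV :: nat set" f] by auto
  have "strict_mono (enumerate {a. f a = f a0})" using strict_mono_enumerate[OF inf] .
  moreover have "\<forall>n. f (enumerate {a. f a = f a0} n) = f a0"
    using enumerate_in_set[OF inf] by simp
  ultimately show ?thesis by blast
qed

lemma pigeon_fam:
  fixes g :: "'i \<Rightarrow> nat \<Rightarrow> 'b"
  assumes "finite I" "finite S" "\<forall>c\<in>I. \<forall>n. g c n \<in> S"
  shows "\<exists>\<phi>::nat\<Rightarrow>nat. strict_mono \<phi> \<and> (\<forall>c\<in>I. \<exists>x. \<forall>n. g c (\<phi> n) = x)"
  using assms
proof (induction I rule: finite_induct)
  case empty
  show ?case by (intro exI[of _ "\<lambda>n. n"]) (simp add: strict_mono_def)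
next
  case (insert c I)
  then obtain \<phi> :: "nat \<Rightarrow> nat" where \<phi>: "strict_mono \<phi>" "\<forall>c\<in>I. \<exists>x. \<forall>n. g c (\<phi> n) = x" by auto
  obtain \<psi> :: "nat \<Rightarrow> nat" and x where \<psi>: "strict_mono \<psi>" "\<forall>n. g c (\<phi> (\<psi> n)) = x"
    using pigeon_seq[of S "\<lambda>n. g c (\<phi> n)"] insert.prems by auto
  have "\<forall>c'\<in>insert c I. \<exists>x. \<forall>n. g c' (\<phi> (\<psi> n)) = x"
  proof
    fix c' assume "c' \<in> insert c I"
    then show "\<exists>x. \<forall>n. g c' (\<phi> (\<psi> n)) = x"
    proof
      assume "c' = c" then show ?thesis using \<psi>(2) by blast
    next
      assume "c' \<in> I"
      then obtain x where "\<forall>n. g c' (\<phi> n) = x" using \<phi>(2) by blast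
      then show ?thesis by blast
    qed
  qed
  then show ?case using sm_comp[OF \<phi>(1) \<psi>(1)] by blast
qed

fun mkseq :: "(nat \<Rightarrow> nat \<Rightarrow> bool) \<Rightarrow> nat \<Rightarrow> nat" where
  "mkseq Q 0 = (SOME n. Q 0 n)"
| "mkseq Q (Suc k) = (SOME n. mkseq Q k < n \<and> Q (Suc k) n)"

lemma mk_seq:
  fixes Q :: "nat \<Rightarrow> nat \<Rightarrow> bool"
  assumes "\<forall>k N. \<exists>n>N. Q k n"
  shows "\<exists>\<psi>::nat\<Rightarrow>nat. strict_mono \<psi> \<and> (\<forall>k. Q k (\<psi> k))"
proof -
  have q: "Q k (mkseq Q k)" for k
  proof (cases k)
    case 0 then show ?thesis using assms someI_ex[of "\<lambda>n. Q 0 n"] by auto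
  next
    case (Suc j) then show ?thesis using assms someI_ex[of "\<lambda>n. mkseq Q j < n \<and> Q (Suc j) n"] by auto
  qed
  have "mkseq Q k < mkseq Q (Suc k)" for k
    using assms someI_ex[of "\<lambda>n. mkseq Q k < n \<and> Q (Suc k) n"] by auto
  then have "strict_mono (mkseq Q)" by (simp add: strict_mono_Suc_iff)
  then show ?thesis using q by blast
qed

lemma mk_seq0:
  fixes Q :: "nat \<Rightarrow> nat \<Rightarrow> bool"
  assumes "\<forall>k N. \<exists>n>N. Q k n"
  shows "\<exists>\<chi>::nat\<Rightarrow>nat. strict_mono \<chi> \<and> \<chi> 0 = 0 \<and> (\<forall>k\<ge>1. Q k (\<chi> k))"
proof -
  have "\<forall>k N. \<exists>n>N. 0 < n \<and> Q k n"
  proof (intro allI)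
    fix k N
    obtain n where "n > N" "Q k n" using assms by blast
    then show "\<exists>n>N. 0 < n \<and> Q k n" by (intro exI[of _ n]) simp
  qed
  then obtain \<psi> where \<psi>: "strict_mono \<psi>" "\<forall>k. 0 < \<psi> k \<and> Q k (\<psi> k)"
    using mk_seq[of "\<lambda>k n. 0 < n \<and> Q k n"] by blast
  define \<chi> where "\<chi> k = (if k = 0 then 0 else \<psi> k)" for k
  have "\<chi> k < \<chi> (Suc k)" for k
    using \<psi> by (cases k) (auto simp: \<chi>_def strict_mono_def)
  then have "strict_mono \<chi>" by (simp add: strict_mono_Suc_iff)
  then show ?thesis using \<psi>(2) by (intro exI[of _ \<chi>]) (simp add: \<chi>_def)
qed

lemma unb_seq:
  fixes h :: "nat \<Rightarrow> nat"
  assumes "\<forall>M. \<exists>n. M < h n"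
  shows "\<exists>\<psi>::nat\<Rightarrow>nat. strict_mono \<psi> \<and> (\<forall>n. n \<le> h (\<psi> n))"
proof -
  have "\<forall>k N. \<exists>n>N. k \<le> h n"
  proof (intro allI)
    fix k N
    obtain n where n: "max k (Max (h ` {..N})) < h n" using assms by blast
    have "n > N"
    proof (rule ccontr)
      assume "\<not> N < n"
      then have "h n \<le> Max (h ` {..N})" by (intro Max_ge) auto
      moreover have "Max (h ` {..N}) < h n" using n by (simp only: max_less_iff_conj)
      ultimately show False by linarith
    qed
    then show "\<exists>n>N. k \<le> h n" using n by (intro exI[of _ n]) simp
  qed
  then show ?thesis using mk_seq[of "\<lambda>k n. k \<le> h n"] by blast
qed

lemma bu_fam:
  fixes g :: "nat \<Rightarrow> nat \<Rightarrow> nat"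
  assumes "finite I"
  shows "\<exists>(\<phi>::nat\<Rightarrow>nat) U M. strict_mono \<phi> \<and> U \<subseteq> I \<and> (\<forall>c\<in>U. \<forall>n. n \<le> g c (\<phi> n)) \<and> (\<forall>c\<in>I - U. \<forall>n. g c (\<phi> n) \<le> M)"
  using assms
proof (induction I rule: finite_induct)
  case empty
  show ?case by (intro exI[of _ "\<lambda>n. n"] exI[of _ "{}"] exI[of _ 0]) (simp add: strict_mono_def)
next
  case (insert c I)
  then obtain \<phi> :: "nat \<Rightarrow> nat" and U M where IH: "strict_mono \<phi>" "U \<subseteq> I" "\<forall>c\<in>U. \<forall>n. n \<le> g c (\<phi> n)" "\<forall>c\<in>I - U. \<forall>n. g c (\<phi> n) \<le> M"
    by blast
  show ?case
  proof (cases "\<exists>M'. \<forall>n. g c (\<phi> n) \<le> M'")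
    case True
    then obtain M' where M': "\<forall>n. g c (\<phi> n) \<le> M'" by blast
    have "\<forall>c'\<in>insert c I - U. \<forall>n. g c' (\<phi> n) \<le> max M M'"
    proof (intro ballI allI)
      fix c' n assume c': "c' \<in> insert c I - U"
      show "g c' (\<phi> n) \<le> max M M'"
      proof (cases "c' = c")
        case True then show ?thesis using M' by (metis le_max_iff_disj)
      next
        case False then have "c' \<in> I - U" using c' by blast
        then show ?thesis using IH(4) by (metis le_max_iff_disj)
      qed
    qed
    then show ?thesis using IH(1,2,3) by (intro exI[of _ \<phi>] exI[of _ U] exI[of _ "max M M'"]) auto
  next
    case False
    then have "\<forall>M'. \<exists>n. M' < g c (\<phi> n)" by (meson not_le)
    then obtain \<psi> :: "nat \<Rightarrow> nat" where \<psi>: "strict_mono \<psi>" "\<forall>n. n \<le> g c (\<phi> (\<psi> n))"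
      using unb_seq[of "\<lambda>n. g c (\<phi> n)"] by blast
    have "\<forall>c'\<in>insert c U. \<forall>n. n \<le> g c' (\<phi> (\<psi> n))"
    proof (intro ballI allI)
      fix c' n assume c': "c' \<in> insert c U"
      show "n \<le> g c' (\<phi> (\<psi> n))"
      proof (cases "c' = c")
        case True then show ?thesis using \<psi>(2) by simp
      next
        case False then have "c' \<in> U" using c' by blast
        then have "\<psi> n \<le> g c' (\<phi> (\<psi> n))" using IH(3) by blast
        moreover have "n \<le> \<psi> n" using sm_ge[OF \<psi>(1)] .
        ultimately show ?thesis by linarith
      qed
    qed
    moreover have "\<forall>c'\<in>insert c I - insert c U. \<forall>n. g c' (\<phi> (\<psi> n)) \<le> M"
      using IH(4) by blast
    ultimately show ?thesis using sm_comp[OF IH(1) \<psi>(1)] IH(2)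
      by (intro exI[of _ "\<lambda>n. \<phi> (\<psi> n)"] exI[of _ "insert c U"] exI[of _ M]) auto
  qed
qed



definition FAM :: "'a set \<Rightarrow> nat \<Rightarrow> bool" where
  "FAM A k \<longleftrightarrow> (\<forall>(I::nat set) (s::nat \<Rightarrow> nat \<Rightarrow> 'a list). finite I \<longrightarrow>
     (\<forall>c\<in>I. \<forall>n. set (s c n) \<subseteq> A \<and> card (set (s c n)) \<le> k) \<longrightarrow>
     (\<exists>\<phi>::nat\<Rightarrow>nat. strict_mono \<phi> \<and> (\<forall>c\<in>I. adequate A (\<lambda>n. s c (\<phi> n)))))"

lemma FAM_D:
  fixes I :: "nat set" and s :: "nat \<Rightarrow> nat \<Rightarrow> 'a list"
  assumes "FAM A k" "finite I" "\<forall>c\<in>I. \<forall>n. set (s c n) \<subseteq> A \<and> card (set (s c n)) \<le> k"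
  shows "\<exists>\<phi>::nat\<Rightarrow>nat. strict_mono \<phi> \<and> (\<forall>c\<in>I. adequate A (\<lambda>n. s c (\<phi> n)))"
proof -
  have "finite I \<longrightarrow> (\<forall>c\<in>I. \<forall>n. set (s c n) \<subseteq> A \<and> card (set (s c n)) \<le> k) \<longrightarrow>
     (\<exists>\<phi>::nat\<Rightarrow>nat. strict_mono \<phi> \<and> (\<forall>c\<in>I. adequate A (\<lambda>n. s c (\<phi> n))))"
    using assms(1)[unfolded FAM_def, THEN spec[of _ I], THEN spec[of _ s]] .
  then show ?thesis using assms(2,3) by blast
qed

lemma FAM_0: "FAM A 0"
  unfolding FAM_def
proof (intro allI impI)
  fix I :: "nat set" and s :: "nat \<Rightarrow> nat \<Rightarrow> 'a list"
  assume h: "\<forall>c\<in>I. \<forall>n. set (s c n) \<subseteq> A \<and> card (set (s c n)) \<le> 0"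
  have "\<forall>c\<in>I. adequate A (\<lambda>n. s c n)"
  proof
    fix c assume "c \<in> I"
    then have "\<forall>n. s c n = []" using h by simp
    then have "s c = (\<lambda>n. [])" by (intro ext) simp
    then show "adequate A (\<lambda>n. s c n)" using ad_nil by simp
  qed
  moreover have "strict_mono (\<lambda>n::nat. n)" by (simp add: strict_mono_def)
  ultimately show "\<exists>\<phi>::nat\<Rightarrow>nat. strict_mono \<phi> \<and> (\<forall>c\<in>I. adequate A (\<lambda>n. s c (\<phi> n)))" by blast
qed



lemma core:
  fixes s :: "nat \<Rightarrow> nat \<Rightarrow> 'a list" and C :: "nat \<Rightarrow> 'a set" and \<alpha> :: "nat \<Rightarrow> 'a list"
  assumes IH: "FAM A k" and finI: "finite I" and finA: "finite A"
    and sC: "\<forall>c\<in>I. \<forall>n. set (s c n) = C c" and CA: "\<forall>c\<in>I. C c \<subseteq> A"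
    and Ck: "\<forall>c\<in>I. card (C c) \<le> Suc k"
    and U1: "U \<subseteq> {c\<in>I. card (C c) = Suc k}"
    and U2: "\<forall>c\<in>U. \<forall>n. n \<le> length (fst (gdec (C c) (s c n)))"
    and al: "\<forall>c\<in>{c\<in>I. card (C c) = Suc k} - U. \<forall>n. map snd (fst (gdec (C c) (s c n))) = \<alpha> c"
  shows "\<exists>\<phi>::nat\<Rightarrow>nat. strict_mono \<phi> \<and> (\<forall>c\<in>I. adequate A (\<lambda>n. s c (\<phi> n)))"
proof -
  define big where "big = {c\<in>I. card (C c) = Suc k}"
  have Cne: "C c \<noteq> {}" if "c \<in> big" for c using that by (auto simp: big_def)
  have Cfin: "finite (C c)" if "c \<in> I" for c using that CA finA finite_subset by blast
  define bs where "bs c n = fst (gdec (C c) (s c n))" for c n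
  define rr where "rr c n = snd (gdec (C c) (s c n))" for c n
  have dsp: "dspec (C c) (s c n) (bs c n, rr c n)" if "c \<in> big" for c n
    using gdec[OF Cne[OF that], of "s c n"] sC that by (simp add: bs_def rr_def big_def)
  have dsp1: "s c n = concat (map (\<lambda>(z,a). z @ [a]) (bs c n)) @ rr c n" if "c \<in> big" for c n
    using dsp[OF that] by (simp add: dspec_def)
  have dsp2: "\<forall>b\<in>set (bs c n). set (fst b) \<subset> C c \<and> set (fst b @ [snd b]) = C c" if "c \<in> big" for c n
    using dsp[OF that] by (simp add: dspec_def)
  have dsp3: "set (rr c n) \<subset> C c" if "c \<in> big" for c n
    using dsp[OF that] by (simp add: dspec_def)
  have al': "map snd (bs c n) = \<alpha> c" if "c \<in> big - U" for c n
    using al that by (simp add: bs_def big_def)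
  have lenbs: "length (bs c n) = length (\<alpha> c)" if "c \<in> big - U" for c n
    using al'[OF that, of n] by (metis length_map)
  define t where "t j n = (case prod_decode j of (c, i) \<Rightarrow>
      if c \<in> big then (if i < length (\<alpha> c) then fst (bs c n ! i) else rr c n) else s c n)" for j n
  define J where "J = (\<lambda>c. prod_encode (c, 0)) ` (I - big) \<union>
      (\<Union>c\<in>big - U. (\<lambda>i. prod_encode (c, i)) ` {..length (\<alpha> c)})"
  have finbig: "finite big" using finI by (simp add: big_def)
  have finJ: "finite J" unfolding J_def using finI finbig by blast
  have t_small: "t (prod_encode (c, 0)) n = s c n" if "c \<notin> big" for c n
    using that by (simp add: t_def)
  have t_piece: "t (prod_encode (c, i)) n = fst (bs c n ! i)" if "c \<in> big" "i < length (\<alpha> c)" for c i n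
    using that by (simp add: t_def)
  have t_rest: "t (prod_encode (c, length (\<alpha> c))) n = rr c n" if "c \<in> big" for c n
    using that by (simp add: t_def)
  have tJ: "\<forall>j\<in>J. \<forall>n. set (t j n) \<subseteq> A \<and> card (set (t j n)) \<le> k"
  proof (intro ballI allI)
    fix j n assume "j \<in> J"
    then consider (a) c where "c \<in> I - big" "j = prod_encode (c, 0)"
      | (b) c i where "c \<in> big - U" "i \<le> length (\<alpha> c)" "j = prod_encode (c, i)"
      unfolding J_def by blast
    then show "set (t j n) \<subseteq> A \<and> card (set (t j n)) \<le> k"
    proof cases
      case a
      have "set (t j n) = C c" using a t_small sC by simp
      moreover have "card (C c) \<le> k" using a Ck by (auto simp: big_def)
      ultimately show ?thesis using a CA by simp
    next
      case b
      have cb: "c \<in> big" "c \<in> I" using b by (auto simp: big_def)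
      have "set (t j n) \<subset> C c"
      proof (cases "i < length (\<alpha> c)")
        case True
        then have "bs c n ! i \<in> set (bs c n)" using lenbs[OF b(1)] by simp
        then have "set (fst (bs c n ! i)) \<subset> C c" using dsp2[OF cb(1)] by blast
        then show ?thesis using b True t_piece[OF cb(1) True] by simp
      next
        case False
        then have "i = length (\<alpha> c)" using b by simp
        then show ?thesis using b t_rest[OF cb(1)] dsp3[OF cb(1)] by simp
      qed
      moreover have "card (C c) = Suc k" using cb by (simp add: big_def)
      ultimately have "card (set (t j n)) < Suc k" using psubset_card_mono[OF Cfin[OF cb(2)]] by metis
      then show ?thesis using \<open>set (t j n) \<subset> C c\<close> CA cb by auto
    qed
  qed
  obtain \<psi> :: "nat \<Rightarrow> nat" where \<psi>: "strict_mono \<psi>" "\<forall>j\<in>J. adequate A (\<lambda>n. t j (\<psi> n))"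
    using FAM_D[OF IH finJ tJ] by blast
  define y where "y c = s c (\<psi> 0)" for c
  define Q where "Q m x \<longleftrightarrow> (\<forall>c\<in>U. (length (y c) + 1) * (m + 1) \<le> length (bs c (\<psi> x)))" for m x
  have finU: "finite U" using finite_subset[OF U1] finI by simp
  have "\<forall>m N. \<exists>x>N. Q m x"
  proof (intro allI)
    fix m N :: nat
    define Bd where "Bd = (\<Sum>c\<in>U. (length (y c) + 1) * (m + 1))"
    have "Q m (Suc (N + Bd))" unfolding Q_def
    proof
      fix c assume c: "c \<in> U"
      have "(length (y c) + 1) * (m + 1) \<le> Bd" unfolding Bd_def
        using c finU by (intro member_le_sum) auto
      also have "\<dots> \<le> Suc (N + Bd)" by simp
      also have "\<dots> \<le> \<psi> (Suc (N + Bd))" using sm_ge[OF \<psi>(1)] .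
      also have "\<dots> \<le> length (bs c (\<psi> (Suc (N + Bd))))" using U2 c unfolding bs_def by blast
      finally show "(length (y c) + 1) * (m + 1) \<le> length (bs c (\<psi> (Suc (N + Bd))))" .
    qed
    then show "\<exists>x>N. Q m x" by (intro exI[of _ "Suc (N + Bd)"]) simp
  qed
  then obtain \<chi> :: "nat \<Rightarrow> nat" where \<chi>: "strict_mono \<chi>" "\<chi> 0 = 0" "\<forall>m\<ge>1. Q m (\<chi> m)"
    using mk_seq0[of Q] by blast
  have "\<forall>c\<in>I. adequate A (\<lambda>n. s c (\<psi> (\<chi> n)))"
  proof
    fix c assume cI: "c \<in> I"
    consider (small) "c \<notin> big" | (bd) "c \<in> big - U" | (ub) "c \<in> U" using U1 by (auto simp: big_def)
    then show "adequate A (\<lambda>n. s c (\<psi> (\<chi> n)))"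
    proof cases
      case small
      have j: "prod_encode (c, 0) \<in> J" unfolding J_def using cI small by blast
      have "adequate A (\<lambda>n. t (prod_encode (c, 0)) (\<psi> n))" using \<psi>(2) j by blast
      then have "adequate A (\<lambda>n. s c (\<psi> n))" using t_small[OF small] by simp
      then show ?thesis using ad_sub[OF _ \<chi>(1) \<chi>(2), of A "\<lambda>n. s c (\<psi> n)"] by simp
    next
      case bd
      have cb: "c \<in> big" using bd by simp
      define K where "K = length (\<alpha> c)"
      define Z where "Z i n = fst (bs c (\<psi> (\<chi> n)) ! i)" for i n
      have adZ: "\<forall>i<K. adequate A (Z i)"
      proof (intro allI impI)
        fix i assume i: "i < K"
        have "prod_encode (c, i) \<in> (\<lambda>i. prod_encode (c, i)) ` {..length (\<alpha> c)}" using i K_def by simp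
        then have j: "prod_encode (c, i) \<in> J" unfolding J_def using bd by blast
        have "adequate A (\<lambda>n. t (prod_encode (c, i)) (\<psi> n))" using \<psi>(2) j by blast
        then have "adequate A (\<lambda>n. fst (bs c (\<psi> n) ! i))" using t_piece[OF cb] i K_def by simp
        then have "adequate A (\<lambda>n. fst (bs c (\<psi> (\<chi> n)) ! i))"
          using ad_sub[OF _ \<chi>(1) \<chi>(2), of A "\<lambda>n. fst (bs c (\<psi> n) ! i)"] by simp
        then show "adequate A (Z i)" unfolding Z_def by simp
      qed
      have adR: "adequate A (\<lambda>n. rr c (\<psi> (\<chi> n)))"
      proof -
        have "prod_encode (c, K) \<in> (\<lambda>i. prod_encode (c, i)) ` {..length (\<alpha> c)}" using K_def by simp
        then have j: "prod_encode (c, K) \<in> J" unfolding J_def using bd by blast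
        have "adequate A (\<lambda>n. t (prod_encode (c, K)) (\<psi> n))" using \<psi>(2) j by blast
        then have "adequate A (\<lambda>n. rr c (\<psi> n))" using t_rest[OF cb] K_def by simp
        then show ?thesis using ad_sub[OF _ \<chi>(1) \<chi>(2), of A "\<lambda>n. rr c (\<psi> n)"] by simp
      qed
      have alA: "\<forall>i<K. \<alpha> c ! i \<in> A"
      proof (intro allI impI)
        fix i assume i: "i < K"
        have "bs c 0 ! i \<in> set (bs c 0)" using i lenbs[OF bd] K_def by simp
        then have "set (fst (bs c 0 ! i) @ [snd (bs c 0 ! i)]) = C c" using dsp2[OF cb] by blast
        then have "snd (bs c 0 ! i) \<in> A" using CA cI by auto
        moreover have "snd (bs c 0 ! i) = \<alpha> c ! i" using al'[OF bd, of 0] i lenbs[OF bd] K_def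
          by (metis nth_map)
        ultimately show "\<alpha> c ! i \<in> A" by simp
      qed
      have eq: "s c (\<psi> (\<chi> n)) = concat (map (\<lambda>i. Z i n @ [\<alpha> c ! i]) [0..<K]) @ rr c (\<psi> (\<chi> n))" for n
      proof -
        let ?m = "\<psi> (\<chi> n)"
        have "map (\<lambda>(z,a). z @ [a]) (bs c ?m) = map (\<lambda>i. Z i n @ [\<alpha> c ! i]) [0..<K]"
        proof (rule nth_equalityI)
          show "length (map (\<lambda>(z,a). z @ [a]) (bs c ?m)) = length (map (\<lambda>i. Z i n @ [\<alpha> c ! i]) [0..<K])"
            using lenbs[OF bd] K_def by simp
        next
          fix i assume "i < length (map (\<lambda>(z,a). z @ [a]) (bs c ?m))"
          then have i: "i < K" using lenbs[OF bd] K_def by simp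
          have "snd (bs c ?m ! i) = \<alpha> c ! i" using al'[OF bd, of ?m] i lenbs[OF bd] K_def
            by (metis nth_map)
          then show "map (\<lambda>(z,a). z @ [a]) (bs c ?m) ! i = map (\<lambda>i. Z i n @ [\<alpha> c ! i]) [0..<K] ! i"
            using i lenbs[OF bd] K_def by (simp add: Z_def case_prod_beta)
        qed
        then show ?thesis using dsp1[OF cb, of ?m] by simp
      qed
      have "adequate A (\<lambda>n. concat (map (\<lambda>i. Z i n @ [\<alpha> c ! i]) [0..<K]) @ rr c (\<psi> (\<chi> n)))"
        using ad_blocks[OF adZ alA adR] .
      then show ?thesis using eq by simp
    next
      case ub
      have cb: "c \<in> big" using ub U1 by (auto simp: big_def)
      have yC: "set (y c) \<subseteq> C c" using sC cI by (simp add: y_def)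
      have fp: "fact_pattern A (spat (y c)) (replicate (length (y c) + 1) (C c))"
        unfolding fact_pattern_def spat_def using yC CA cI Cne[OF cb] by auto
      have mem: "s c (\<psi> (\<chi> n)) \<in> L_pat (spat (y c)) (replicate (length (y c) + 1) (C c)) n" for n
      proof (cases n)
        case 0
        have "length (spat (y c)) = Suc (length (replicate (length (y c) + 1) (C c)))"
          by (simp add: spat_def)
        then have "L_pat (spat (y c)) (replicate (length (y c) + 1) (C c)) 0 = {y c}"
          using L_pat_zero concat_spat by metis
        then show ?thesis using 0 \<chi>(2) by (simp add: y_def)
      next
        case (Suc n')
        let ?m = "\<psi> (\<chi> n)"
        have q: "(length (y c) + 1) * (n + 1) \<le> length (bs c ?m)"
        proof -
          have "Q n (\<chi> n)" using \<chi>(3) Suc by simp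
          then show ?thesis using ub unfolding Q_def by blast
        qed
        then have ne: "bs c ?m \<noteq> []" by (cases "bs c ?m") auto
        have "s c ?m \<in> lang_pow (exact_alph (C c)) (length (bs c ?m))"
          using blocks_pow[of "bs c ?m" "C c" "rr c ?m"] dsp1[OF cb, of ?m] dsp2[OF cb, of ?m] dsp3[OF cb, of ?m] ne
          by auto
        then show ?thesis using emb[of n "y c" "C c" "s c ?m" "length (bs c ?m)"] yC q Suc by simp
      qed
      then show ?thesis using fp unfolding adequate_def adequate_for_def by blast
    qed
  qed
  then show ?thesis using sm_comp[OF \<psi>(1) \<chi>(1)] by blast
qed



lemma step:
  assumes IH: "FAM A k" and finA: "finite A"
  shows "FAM A (Suc k)"
  unfolding FAM_def
proof (intro allI impI)
  fix I :: "nat set" and s :: "nat \<Rightarrow> nat \<Rightarrow> 'a list"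
  assume finI: "finite I" and hs: "\<forall>c\<in>I. \<forall>n. set (s c n) \<subseteq> A \<and> card (set (s c n)) \<le> Suc k"
  have "\<forall>c\<in>I. \<forall>n. set (s c n) \<in> Pow A" using hs by blast
  then obtain \<phi>1 :: "nat \<Rightarrow> nat" where \<phi>1: "strict_mono \<phi>1" "\<forall>c\<in>I. \<exists>x. \<forall>n. set (s c (\<phi>1 n)) = x"
    using pigeon_fam[of I "Pow A" "\<lambda>c n. set (s c n)"] finI finA by blast
  define C where "C c = set (s c (\<phi>1 0))" for c
  have sC: "\<forall>c\<in>I. \<forall>n. set (s c (\<phi>1 n)) = C c"
  proof (intro ballI allI)
    fix c n assume "c \<in> I"
    then obtain x where "\<forall>n. set (s c (\<phi>1 n)) = x" using \<phi>1(2) by blast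
    then show "set (s c (\<phi>1 n)) = C c" unfolding C_def by simp
  qed
  have CA: "\<forall>c\<in>I. C c \<subseteq> A" and Ck: "\<forall>c\<in>I. card (C c) \<le> Suc k"
    using hs unfolding C_def by blast+
  define big where "big = {c\<in>I. card (C c) = Suc k}"
  have finbig: "finite big" using finI by (simp add: big_def)
  have Cne: "C c \<noteq> {}" if "c \<in> big" for c using that by (auto simp: big_def)
  obtain \<phi>2 :: "nat \<Rightarrow> nat" and U M where \<phi>2: "strict_mono \<phi>2" "U \<subseteq> big"
      "\<forall>c\<in>U. \<forall>n. n \<le> length (fst (gdec (C c) (s c (\<phi>1 (\<phi>2 n)))))"
      "\<forall>c\<in>big - U. \<forall>n. length (fst (gdec (C c) (s c (\<phi>1 (\<phi>2 n))))) \<le> M"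
    using bu_fam[OF finbig, of "\<lambda>c n. length (fst (gdec (C c) (s c (\<phi>1 n))))"] by blast
  have inS: "\<forall>c\<in>big - U. \<forall>n. map snd (fst (gdec (C c) (s c (\<phi>1 (\<phi>2 n))))) \<in> {xs. set xs \<subseteq> A \<and> length xs \<le> M}"
  proof (intro ballI allI)
    fix c n assume c: "c \<in> big - U"
    let ?w = "s c (\<phi>1 (\<phi>2 n))"
    have cI: "c \<in> I" using c by (simp add: big_def)
    have "dspec (C c) ?w (gdec (C c) ?w)" using gdec[OF Cne] c sC cI by simp
    then have "\<forall>b\<in>set (fst (gdec (C c) ?w)). set (fst b @ [snd b]) = C c" by (simp add: dspec_def)
    then have "set (map snd (fst (gdec (C c) ?w))) \<subseteq> A" using CA cI by fastforce
    moreover have "length (map snd (fst (gdec (C c) ?w))) \<le> M" using \<phi>2(4) c by simp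
    ultimately show "map snd (fst (gdec (C c) ?w)) \<in> {xs. set xs \<subseteq> A \<and> length xs \<le> M}" by simp
  qed
  obtain \<phi>3 :: "nat \<Rightarrow> nat" where \<phi>3: "strict_mono \<phi>3"
      "\<forall>c\<in>big - U. \<exists>x. \<forall>n. map snd (fst (gdec (C c) (s c (\<phi>1 (\<phi>2 (\<phi>3 n)))))) = x"
    using pigeon_fam[of "big - U" "{xs. set xs \<subseteq> A \<and> length xs \<le> M}"
        "\<lambda>c n. map snd (fst (gdec (C c) (s c (\<phi>1 (\<phi>2 n)))))"] finbig finite_lists_length_le[OF finA] inS
    by blast
  define \<alpha> where "\<alpha> c = map snd (fst (gdec (C c) (s c (\<phi>1 (\<phi>2 (\<phi>3 0))))))" for c
  define s' where "s' c n = s c (\<phi>1 (\<phi>2 (\<phi>3 n)))" for c n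
  have sC': "\<forall>c\<in>I. \<forall>n. set (s' c n) = C c" using sC by (simp add: s'_def)
  have U1: "U \<subseteq> {c\<in>I. card (C c) = Suc k}" using \<phi>2(2) by (simp add: big_def)
  have U2: "\<forall>c\<in>U. \<forall>n. n \<le> length (fst (gdec (C c) (s' c n)))"
  proof (intro ballI allI)
    fix c n assume "c \<in> U"
    then have "\<phi>3 n \<le> length (fst (gdec (C c) (s' c n)))" using \<phi>2(3) by (simp add: s'_def)
    then show "n \<le> length (fst (gdec (C c) (s' c n)))" using sm_ge[OF \<phi>3(1), of n] by linarith
  qed
  have al: "\<forall>c\<in>{c\<in>I. card (C c) = Suc k} - U. \<forall>n. map snd (fst (gdec (C c) (s' c n))) = \<alpha> c"
  proof (intro ballI allI)
    fix c n assume "c \<in> {c\<in>I. card (C c) = Suc k} - U"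
    then have "c \<in> big - U" by (simp add: big_def)
    then obtain x where "\<forall>n. map snd (fst (gdec (C c) (s c (\<phi>1 (\<phi>2 (\<phi>3 n)))))) = x" using \<phi>3(2) by blast
    then show "map snd (fst (gdec (C c) (s' c n))) = \<alpha> c" by (simp add: s'_def \<alpha>_def)
  qed
  obtain \<phi> :: "nat \<Rightarrow> nat" where \<phi>: "strict_mono \<phi>" "\<forall>c\<in>I. adequate A (\<lambda>n. s' c (\<phi> n))"
    using core[OF IH finI finA sC' CA Ck U1 U2 al] by blast
  have "strict_mono (\<lambda>n. \<phi>1 (\<phi>2 (\<phi>3 (\<phi> n))))"
    using sm_comp[OF \<phi>1(1) sm_comp[OF \<phi>2(1) sm_comp[OF \<phi>3(1) \<phi>(1)]]] .
  moreover have "\<forall>c\<in>I. adequate A (\<lambda>n. s c (\<phi>1 (\<phi>2 (\<phi>3 (\<phi> n)))))" using \<phi>(2) by (simp add: s'_def)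
  ultimately show "\<exists>\<phi>::nat\<Rightarrow>nat. strict_mono \<phi> \<and> (\<forall>c\<in>I. adequate A (\<lambda>n. s c (\<phi> n)))" by blast
qed

lemma FAM_all: "finite A \<Longrightarrow> FAM A k"
  by (induction k) (auto intro: FAM_0 step)

theorem lemma3:
  fixes A :: "'a set" and w :: "nat \<Rightarrow> 'a list"
  assumes "finite A"
    and "\<And>n. set (w n) \<subseteq> A"
  shows "\<exists>\<phi>. strict_mono \<phi> \<and> adequate A (w \<circ> \<phi>)"
proof -
  have "\<forall>c\<in>{0::nat}. \<forall>n. set ((\<lambda>c n. w n) c n) \<subseteq> A \<and> card (set ((\<lambda>c n. w n) c n)) \<le> card A"
    using assms card_mono[OF assms(1)] by simp
  then obtain \<phi> :: "nat \<Rightarrow> nat" where "strict_mono \<phi>" "\<forall>c\<in>{0::nat}. adequate A (\<lambda>n. (\<lambda>c n. w n) c (\<phi> n))"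
    using FAM_D[OF FAM_all[OF assms(1)], of "{0}" "\<lambda>c n. w n"] by blast
  then show ?thesis by (auto simp: comp_def)
qed


end
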